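(* An orientation-preserving non-Carleman shift $\alpha:\mathbb{R}_+\to\mathbb{R}_+$ belongs to $SOS(\mathbb{R}_+)$ if and only if $\alpha(t)=te^{\omega(t)}$ for $t\in\mathbb{R}_+$, for some real-valued function $\omega\in SO(\mathbb{R}_+)\cap C^1(\mathbb{R}_+)$ such that the function $t\mapsto t\omega'(t)$ also belongs to $SO(\mathbb{R}_+)$ and $\inf_{t\in\mathbb{R}_+}(1+t\omega'(t))>0$.
   Context: $\mathbb{R}_+=(0,\infty)$. $C_b(\mathbb{R}_+)$: bounded continuous complex functions on $\mathbb{R}_+$. $SO(\mathbb{R}_+)$ is the set of $f\in C_b(\mathbb{R}_+)$ with $\lim_{r\to s}\sup\{|f(t)-f(\tau)|:t,\tau\in[\lambda r,r]\}=0$ for $s\in\{0,\infty\}$ and each (equivalently some) $\lambda\in(0,1)$. An orientation-preserving non-Carleman shift is an orientation-preserving diffeomorphism $\alpha$ of $\mathbb{R}_+$ onto itself with no fixed points in $\mathbb{R}_+$ (only fixed points $0$ and $\infty$). $SOS(\mathbb{R}_+)$ is the set of such shifts with $\log\alpha'\in C_b(\mathbb{R}_+)$ and $\alpha'\in SO(\mathbb{R}_+)$. *)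

theory Defs
  imports "HOL-Analysis.Analysis"
begin

definition osc :: "(real \<Rightarrow> complex) \<Rightarrow> real \<Rightarrow> real \<Rightarrow> real" where
  "osc f lam r = Sup {cmod (f t - f \<tau>) | t \<tau>. t \<in> {lam * r..r} \<and> \<tau> \<in> {lam * r..r}}"

definition Cb :: "(real \<Rightarrow> complex) set" where
  "Cb = {f. continuous_on {0<..} f \<and> bounded (f ` {0<..})}"

definition SO :: "(real \<Rightarrow> complex) set" where
  "SO = {f. f \<in> Cb \<and>
     (\<forall>lam. 0 < lam \<and> lam < 1 \<longrightarrow>
        ((\<lambda>r. osc f lam r) \<longlongrightarrow> 0) (at_right 0) \<and>
        ((\<lambda>r. osc f lam r) \<longlongrightarrow> 0) at_top)}"

definition C1_pos :: "(real \<Rightarrow> real) \<Rightarrow> bool" where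
  "C1_pos f \<longleftrightarrow> (\<forall>t>0. f differentiable (at t)) \<and> continuous_on {0<..} (deriv f)"

definition op_non_carleman_shift :: "(real \<Rightarrow> real) \<Rightarrow> bool" where
  "op_non_carleman_shift \<alpha> \<longleftrightarrow>
     bij_betw \<alpha> {0<..} {0<..} \<and>
     C1_pos \<alpha> \<and> C1_pos (inv_into {0<..} \<alpha>) \<and>
     strict_mono_on {0<..} \<alpha> \<and>
     (\<forall>t>0. \<alpha> t \<noteq> t)"

definition SOS :: "(real \<Rightarrow> real) set" where
  "SOS = {\<alpha>. op_non_carleman_shift \<alpha> \<and>
     (\<lambda>t. complex_of_real (ln (deriv \<alpha> t))) \<in> Cb \<and>
     (\<lambda>t. complex_of_real (deriv \<alpha> t)) \<in> SO}"

end

theory Submission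
  imports Defs
begin


definition OSCF :: "real filter \<Rightarrow> (real \<Rightarrow> real) \<Rightarrow> bool" where
  "OSCF F f \<longleftrightarrow> (\<forall>lam e. 0 < lam \<and> lam < 1 \<and> e > 0 \<longrightarrow>
     eventually (\<lambda>r. \<forall>s\<in>{lam*r..r}. \<forall>t\<in>{lam*r..r}. \<bar>f s - f t\<bar> \<le> e) F)"

lemma cmod_diff: "cmod (complex_of_real a - complex_of_real b) = \<bar>a - b\<bar>"
  by (simp only: of_real_diff[symmetric] norm_of_real)

lemma osc_facts:
  assumes B: "\<forall>t>0. \<bar>f t\<bar> \<le> B" and lam: "0 < lam" and lam1: "lam < 1" and r: "r > 0"
  shows "osc (\<lambda>t. complex_of_real (f t)) lam r \<ge> 0"
    and "osc (\<lambda>t. complex_of_real (f t)) lam r \<le> e \<longleftrightarrow>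
         (\<forall>s\<in>{lam*r..r}. \<forall>t\<in>{lam*r..r}. \<bar>f s - f t\<bar> \<le> e)"
proof -
  let ?S = "{cmod (complex_of_real (f t) - complex_of_real (f \<tau>)) | t \<tau>. t \<in> {lam * r..r} \<and> \<tau> \<in> {lam * r..r}}"
  have eq: "?S = {\<bar>f t - f \<tau>\<bar> | t \<tau>. t \<in> {lam * r..r} \<and> \<tau> \<in> {lam * r..r}}"
    by (simp only: cmod_diff)
  have pos: "x \<in> {lam*r..r} \<Longrightarrow> x > 0" for x using lam r
  proof -
    assume "x \<in> {lam*r..r}"
    then have "lam*r \<le> x" by simp
    moreover have "0 < lam*r" using lam r by simp
    ultimately show "x > 0" by linarith
  qed
  have bdd: "bdd_above ?S"
    unfolding eq bdd_above_def
  proof (rule exI[of _ "2*B"], clarify)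
    fix t \<tau> assume "t \<in> {lam*r..r}" "\<tau> \<in> {lam*r..r}"
    then have "t > 0" "\<tau> > 0" using pos by blast+
    then have "\<bar>f t\<bar> \<le> B" "\<bar>f \<tau>\<bar> \<le> B" using B by blast+
    then show "\<bar>f t - f \<tau>\<bar> \<le> 2*B" by linarith
  qed
  have rin: "r \<in> {lam*r..r}" using lam1 r by simp
  have z0: "(0::real) = \<bar>f r - f r\<bar>" by simp
  have zero: "0 \<in> ?S" unfolding eq using rin z0 by blast
  have ne: "?S \<noteq> {}" using zero by blast

  show "osc (\<lambda>t. complex_of_real (f t)) lam r \<ge> 0"
    unfolding osc_def using cSup_upper[OF zero bdd] .
  show "osc (\<lambda>t. complex_of_real (f t)) lam r \<le> e \<longleftrightarrow>
         (\<forall>s\<in>{lam*r..r}. \<forall>t\<in>{lam*r..r}. \<bar>f s - f t\<bar> \<le> e)"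
  proof -
    have "Sup ?S \<le> e \<longleftrightarrow> (\<forall>x\<in>?S. x \<le> e)" by (rule cSup_le_iff[OF ne bdd])
    then show ?thesis unfolding osc_def eq by blast
  qed
qed

lemma osc_tendsto_iff:
  assumes B: "\<forall>t>0. \<bar>f t\<bar> \<le> B" and lam: "0 < lam" and lam1: "lam < 1" and ev: "eventually (\<lambda>r. r > 0) F"
  shows "((\<lambda>r. osc (\<lambda>t. complex_of_real (f t)) lam r) \<longlongrightarrow> 0) F \<longleftrightarrow>
     (\<forall>e>0. eventually (\<lambda>r. \<forall>s\<in>{lam*r..r}. \<forall>t\<in>{lam*r..r}. \<bar>f s - f t\<bar> \<le> e) F)"
  (is "?L \<longleftrightarrow> ?R")
proof
  assume L: ?L
  show ?R
  proof (intro allI impI)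
    fix e :: real assume e: "e > 0"
    from L e have "eventually (\<lambda>r. dist (osc (\<lambda>t. complex_of_real (f t)) lam r) 0 < e) F"
      by (simp add: tendsto_iff)
    then show "eventually (\<lambda>r. \<forall>s\<in>{lam*r..r}. \<forall>t\<in>{lam*r..r}. \<bar>f s - f t\<bar> \<le> e) F"
      using ev
    proof eventually_elim
      case (elim r)
      then show ?case using osc_facts(2)[OF B lam lam1 elim(2), of e] by auto
    qed
  qed
next
  assume R: ?R
  show ?L unfolding tendsto_iff
  proof (intro allI impI)
    fix e :: real assume e: "e > 0"
    from R have "eventually (\<lambda>r. \<forall>s\<in>{lam*r..r}. \<forall>t\<in>{lam*r..r}. \<bar>f s - f t\<bar> \<le> e/2) F"
      using e by (meson half_gt_zero)
    then show "eventually (\<lambda>r. dist (osc (\<lambda>t. complex_of_real (f t)) lam r) 0 < e) F"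
      using ev
    proof eventually_elim
      case (elim r)
      then have "osc (\<lambda>t. complex_of_real (f t)) lam r \<le> e/2"
        using osc_facts(2)[OF B lam lam1 elim(2), of "e/2"] by auto
      moreover have "osc (\<lambda>t. complex_of_real (f t)) lam r \<ge> 0" using osc_facts(1)[OF B lam lam1 elim(2)] .
      ultimately show ?case using e by (simp add: dist_real_def)
    qed
  qed
qed

lemma Cb_real_iff:
  "(\<lambda>t. complex_of_real (f t)) \<in> Cb \<longleftrightarrow> continuous_on {0<..} f \<and> (\<exists>B. \<forall>t>0. \<bar>f t\<bar> \<le> B)"
proof -
  have c: "continuous_on {0<..} (\<lambda>t. complex_of_real (f t)) \<longleftrightarrow> continuous_on {0<..} f"
  proof
    assume "continuous_on {0<..} (\<lambda>t. complex_of_real (f t))"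
    from continuous_on_Re[OF this] show "continuous_on {0<..} f" by simp
  next
    assume "continuous_on {0<..} f"
    then show "continuous_on {0<..} (\<lambda>t. complex_of_real (f t))"
      by (intro continuous_on_of_real)
  qed
  have b: "bounded ((\<lambda>t. complex_of_real (f t)) ` {0<..}) \<longleftrightarrow> (\<exists>B. \<forall>t>0. \<bar>f t\<bar> \<le> B)"
    unfolding bounded_iff by auto
  show ?thesis unfolding Cb_def using c b by auto
qed

definition SOR :: "(real \<Rightarrow> real) \<Rightarrow> bool" where
  "SOR f \<longleftrightarrow> (\<lambda>t. complex_of_real (f t)) \<in> SO"

lemma SOR_iff:
  "SOR f \<longleftrightarrow> continuous_on {0<..} f \<and> (\<exists>B. \<forall>t>0. \<bar>f t\<bar> \<le> B) \<and>
     OSCF (at_right 0) f \<and> OSCF at_top f"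
proof -
  have ev1: "eventually (\<lambda>r::real. r > 0) (at_right 0)" by (rule eventually_at_right_less)
  have ev2: "eventually (\<lambda>r::real. r > 0) at_top" by (rule eventually_gt_at_top)
  have key: "(\<forall>lam. 0 < lam \<and> lam < 1 \<longrightarrow>
        ((\<lambda>r. osc (\<lambda>t. complex_of_real (f t)) lam r) \<longlongrightarrow> 0) (at_right 0) \<and>
        ((\<lambda>r. osc (\<lambda>t. complex_of_real (f t)) lam r) \<longlongrightarrow> 0) at_top)
     \<longleftrightarrow> OSCF (at_right 0) f \<and> OSCF at_top f" if B: "\<forall>t>0. \<bar>f t\<bar> \<le> B" for B
  proof -
    have "((\<lambda>r. osc (\<lambda>t. complex_of_real (f t)) lam r) \<longlongrightarrow> 0) (at_right 0) \<and>
        ((\<lambda>r. osc (\<lambda>t. complex_of_real (f t)) lam r) \<longlongrightarrow> 0) at_top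
      \<longleftrightarrow> (\<forall>e>0. eventually (\<lambda>r. \<forall>s\<in>{lam*r..r}. \<forall>t\<in>{lam*r..r}. \<bar>f s - f t\<bar> \<le> e) (at_right 0))
        \<and> (\<forall>e>0. eventually (\<lambda>r. \<forall>s\<in>{lam*r..r}. \<forall>t\<in>{lam*r..r}. \<bar>f s - f t\<bar> \<le> e) at_top)"
      if "0 < lam" "lam < 1" for lam
      using osc_tendsto_iff[OF B that ev1] osc_tendsto_iff[OF B that ev2] by simp
    note H = this
    show ?thesis
    proof
      assume L: "\<forall>lam. 0 < lam \<and> lam < 1 \<longrightarrow>
        ((\<lambda>r. osc (\<lambda>t. complex_of_real (f t)) lam r) \<longlongrightarrow> 0) (at_right 0) \<and>
        ((\<lambda>r. osc (\<lambda>t. complex_of_real (f t)) lam r) \<longlongrightarrow> 0) at_top"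
      show "OSCF (at_right 0) f \<and> OSCF at_top f" unfolding OSCF_def
      proof (intro conjI allI impI)
        fix lam e :: real assume a: "0 < lam \<and> lam < 1 \<and> e > 0"
        then have l1: "0 < lam" "lam < 1" "e > 0" by simp_all
        have "((\<lambda>r. osc (\<lambda>t. complex_of_real (f t)) lam r) \<longlongrightarrow> 0) (at_right 0) \<and>
          ((\<lambda>r. osc (\<lambda>t. complex_of_real (f t)) lam r) \<longlongrightarrow> 0) at_top"
          using L l1 by simp
        then have hh: "(\<forall>e>0. eventually (\<lambda>r. \<forall>s\<in>{lam*r..r}. \<forall>t\<in>{lam*r..r}. \<bar>f s - f t\<bar> \<le> e) (at_right 0))
          \<and> (\<forall>e>0. eventually (\<lambda>r. \<forall>s\<in>{lam*r..r}. \<forall>t\<in>{lam*r..r}. \<bar>f s - f t\<bar> \<le> e) at_top)"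
          using H[OF l1(1,2)] by (simp only:)
        then show "eventually (\<lambda>r. \<forall>s\<in>{lam*r..r}. \<forall>t\<in>{lam*r..r}. \<bar>f s - f t\<bar> \<le> e) (at_right 0)"
          using l1(3) by simp
        from hh show "eventually (\<lambda>r. \<forall>s\<in>{lam*r..r}. \<forall>t\<in>{lam*r..r}. \<bar>f s - f t\<bar> \<le> e) at_top"
          using l1(3) by simp
      qed
    next
      assume R: "OSCF (at_right 0) f \<and> OSCF at_top f"
      show "\<forall>lam. 0 < lam \<and> lam < 1 \<longrightarrow>
        ((\<lambda>r. osc (\<lambda>t. complex_of_real (f t)) lam r) \<longlongrightarrow> 0) (at_right 0) \<and>
        ((\<lambda>r. osc (\<lambda>t. complex_of_real (f t)) lam r) \<longlongrightarrow> 0) at_top"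
      proof (intro allI impI)
        fix lam :: real assume "0 < lam \<and> lam < 1"
        then have l1: "0 < lam" "lam < 1" by simp_all
        have "(\<forall>e>0. eventually (\<lambda>r. \<forall>s\<in>{lam*r..r}. \<forall>t\<in>{lam*r..r}. \<bar>f s - f t\<bar> \<le> e) (at_right 0))
          \<and> (\<forall>e>0. eventually (\<lambda>r. \<forall>s\<in>{lam*r..r}. \<forall>t\<in>{lam*r..r}. \<bar>f s - f t\<bar> \<le> e) at_top)"
          using R l1 unfolding OSCF_def by simp
        then show "((\<lambda>r. osc (\<lambda>t. complex_of_real (f t)) lam r) \<longlongrightarrow> 0) (at_right 0) \<and>
          ((\<lambda>r. osc (\<lambda>t. complex_of_real (f t)) lam r) \<longlongrightarrow> 0) at_top"
          using H[OF l1] by (simp only:)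
      qed
    qed
  qed
  have S: "SOR f \<longleftrightarrow> (continuous_on {0<..} f \<and> (\<exists>B. \<forall>t>0. \<bar>f t\<bar> \<le> B)) \<and> (\<forall>lam. 0 < lam \<and> lam < 1 \<longrightarrow>
        ((\<lambda>r. osc (\<lambda>t. complex_of_real (f t)) lam r) \<longlongrightarrow> 0) (at_right 0) \<and>
        ((\<lambda>r. osc (\<lambda>t. complex_of_real (f t)) lam r) \<longlongrightarrow> 0) at_top)"
    unfolding SOR_def SO_def Cb_real_iff[symmetric] by (simp only: mem_Collect_eq)
  show ?thesis
  proof (cases "\<exists>B. \<forall>t>0. \<bar>f t\<bar> \<le> B")
    case True
    then obtain B where B: "\<forall>t>0. \<bar>f t\<bar> \<le> B" by blast
    show ?thesis unfolding S key[OF B] by (simp only: conj_assoc)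
  next
    case False
    then show ?thesis unfolding S by (simp only: simp_thms)
  qed
qed



lemma in_seg_pos: "x \<in> {lam*r..r} \<Longrightarrow> 0 < lam \<Longrightarrow> 0 < r \<Longrightarrow> (x::real) > 0"
proof -
  assume "x \<in> {lam*r..r}" "0 < lam" "0 < r"
  then have "lam*r \<le> x" "0 < lam*r" by simp_all
  then show "x > 0" by linarith
qed

lemma OSCF_lip:
  assumes o1: "OSCF F f1" and o2: "OSCF F f2" and ev: "eventually (\<lambda>r. r > 0) F"
    and lip: "\<And>s t. s > 0 \<Longrightarrow> t > 0 \<Longrightarrow> \<bar>h s - h t\<bar> \<le> L * (\<bar>f1 s - f1 t\<bar> + \<bar>f2 s - f2 t\<bar>)"
  shows "OSCF F h"
  unfolding OSCF_def
proof (intro allI impI)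
  fix lam e :: real assume a: "0 < lam \<and> lam < 1 \<and> e > 0"
  define d where "d = e / (2 * (\<bar>L\<bar> + 1))"
  have d: "d > 0" using a unfolding d_def by simp
  have e1: "eventually (\<lambda>r. \<forall>s\<in>{lam*r..r}. \<forall>t\<in>{lam*r..r}. \<bar>f1 s - f1 t\<bar> \<le> d) F"
    using o1 a d unfolding OSCF_def by blast
  have e2: "eventually (\<lambda>r. \<forall>s\<in>{lam*r..r}. \<forall>t\<in>{lam*r..r}. \<bar>f2 s - f2 t\<bar> \<le> d) F"
    using o2 a d unfolding OSCF_def by blast
  show "eventually (\<lambda>r. \<forall>s\<in>{lam*r..r}. \<forall>t\<in>{lam*r..r}. \<bar>h s - h t\<bar> \<le> e) F"
    using e1 e2 ev
  proof eventually_elim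
    case (elim r)
    show ?case
    proof (intro ballI)
      fix s t assume st: "s \<in> {lam*r..r}" "t \<in> {lam*r..r}"
      have sp: "s > 0" "t > 0" using in_seg_pos st a elim(3) by blast+
      have A: "\<bar>f1 s - f1 t\<bar> \<le> d" "\<bar>f2 s - f2 t\<bar> \<le> d" using elim st by blast+
      have "\<bar>h s - h t\<bar> \<le> L * (\<bar>f1 s - f1 t\<bar> + \<bar>f2 s - f2 t\<bar>)" using lip sp by blast
      also have "\<dots> \<le> \<bar>L\<bar> * (\<bar>f1 s - f1 t\<bar> + \<bar>f2 s - f2 t\<bar>)"
        by (intro mult_right_mono) auto
      also have "\<dots> \<le> \<bar>L\<bar> * (2*d)"
        using A by (intro mult_left_mono) auto
      also have "\<dots> = e * (\<bar>L\<bar> / (\<bar>L\<bar> + 1))" unfolding d_def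
        by (simp add: field_simps)
      also have "\<dots> \<le> e * 1"
        using a by (intro mult_left_mono) auto
      finally show "\<bar>h s - h t\<bar> \<le> e" by simp
    qed
  qed
qed

lemma OSCF_near:
  assumes o: "OSCF F f" and ev: "eventually (\<lambda>r. r > 0) F"
    and near: "\<And>e. e > 0 \<Longrightarrow> \<exists>\<mu>. 0 < \<mu> \<and> \<mu> < 1 \<and> (\<forall>t>0. \<exists>\<xi>. \<mu>*t \<le> \<xi> \<and> \<xi> \<le> t \<and> \<bar>h t - f \<xi>\<bar> \<le> e)"
  shows "OSCF F h"
  unfolding OSCF_def
proof (intro allI impI)
  fix lam e :: real assume a: "0 < lam \<and> lam < 1 \<and> e > 0"
  then have "e/3 > 0" by simp
  from near[OF this] obtain \<mu> where mu: "0 < \<mu>" "\<mu> < 1"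
    and nr: "\<forall>t>0. \<exists>\<xi>. \<mu>*t \<le> \<xi> \<and> \<xi> \<le> t \<and> \<bar>h t - f \<xi>\<bar> \<le> e/3" by blast
  have lm1: "0 < lam*\<mu>" using a mu by simp
  have "lam*\<mu> < lam" using a mu by simp
  then have lm: "0 < lam*\<mu>" "lam*\<mu> < 1" using lm1 a by linarith+
  have e1: "eventually (\<lambda>r. \<forall>s\<in>{(lam*\<mu>)*r..r}. \<forall>t\<in>{(lam*\<mu>)*r..r}. \<bar>f s - f t\<bar> \<le> e/3) F"
  proof -
    have "e/3 > 0" using a by simp
    then show ?thesis using o lm unfolding OSCF_def by blast
  qed
  show "eventually (\<lambda>r. \<forall>s\<in>{lam*r..r}. \<forall>t\<in>{lam*r..r}. \<bar>h s - h t\<bar> \<le> e) F"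
    using e1 ev
  proof eventually_elim
    case (elim r)
    show ?case
    proof (intro ballI)
      fix s t assume st: "s \<in> {lam*r..r}" "t \<in> {lam*r..r}"
      have sp: "s > 0" "t > 0" using in_seg_pos st a elim(2) by blast+
      obtain pa where pa: "\<mu>* s \<le> pa" "pa \<le> s" "\<bar>h s - f pa\<bar> \<le> e/3" using nr sp by blast
      obtain pb where pb: "\<mu>*t \<le> pb" "pb \<le> t" "\<bar>h t - f pb\<bar> \<le> e/3" using nr sp by blast
      have "\<mu>*(lam*r) \<le> \<mu>* s" using st mu by (intro mult_left_mono) auto
      then have "(lam*\<mu>)*r \<le> \<mu>* s" by (simp add: algebra_simps)
      then have i1: "pa \<in> {(lam*\<mu>)*r..r}" using pa st by simp
      have "\<mu>*(lam*r) \<le> \<mu>*t" using st mu by (intro mult_left_mono) auto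
      then have "(lam*\<mu>)*r \<le> \<mu>*t" by (simp add: algebra_simps)
      then have i2: "pb \<in> {(lam*\<mu>)*r..r}" using pb st by simp
      have "\<bar>f pa - f pb\<bar> \<le> e/3" using elim(1) i1 i2 by blast
      then show "\<bar>h s - h t\<bar> \<le> e" using pa(3) pb(3) by linarith
    qed
  qed
qed

lemma SOR_lip:
  assumes "SOR f1" "SOR f2" "continuous_on {0<..} h" "\<forall>t>0. \<bar>h t\<bar> \<le> C"
    and lip: "\<And>s t. s > 0 \<Longrightarrow> t > 0 \<Longrightarrow> \<bar>h s - h t\<bar> \<le> L * (\<bar>f1 s - f1 t\<bar> + \<bar>f2 s - f2 t\<bar>)"
  shows "SOR h"
proof -
  have ev1: "eventually (\<lambda>r::real. r > 0) (at_right 0)" by (rule eventually_at_right_less)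
  have ev2: "eventually (\<lambda>r::real. r > 0) at_top" by (rule eventually_gt_at_top)
  have a: "OSCF (at_right 0) f1" "OSCF at_top f1" "OSCF (at_right 0) f2" "OSCF at_top f2"
    using assms(1,2) unfolding SOR_iff by blast+
  have "OSCF (at_right 0) h" by (rule OSCF_lip[OF a(1) a(3) ev1]) (rule lip)
  moreover have "OSCF at_top h" by (rule OSCF_lip[OF a(2) a(4) ev2]) (rule lip)
  ultimately show ?thesis unfolding SOR_iff using assms(3,4) by blast
qed

lemma SOR_near:
  assumes "SOR f" "continuous_on {0<..} h" "\<forall>t>0. \<bar>h t\<bar> \<le> C"
    and near: "\<And>e. e > 0 \<Longrightarrow> \<exists>\<mu>. 0 < \<mu> \<and> \<mu> < 1 \<and> (\<forall>t>0. \<exists>\<xi>. \<mu>*t \<le> \<xi> \<and> \<xi> \<le> t \<and> \<bar>h t - f \<xi>\<bar> \<le> e)"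
  shows "SOR h"
proof -
  have ev1: "eventually (\<lambda>r::real. r > 0) (at_right 0)" by (rule eventually_at_right_less)
  have ev2: "eventually (\<lambda>r::real. r > 0) at_top" by (rule eventually_gt_at_top)
  have a: "OSCF (at_right 0) f" "OSCF at_top f"
    using assms(1) unfolding SOR_iff by blast+
  have "OSCF (at_right 0) h" by (rule OSCF_near[OF a(1) ev1]) (rule near)
  moreover have "OSCF at_top h" by (rule OSCF_near[OF a(2) ev2]) (rule near)
  ultimately show ?thesis unfolding SOR_iff using assms(2,3) by blast
qed



lemma shift_facts:
  assumes op: "op_non_carleman_shift \<alpha>"
  shows shift_D: "\<And>t. t > 0 \<Longrightarrow> (\<alpha> has_real_derivative deriv \<alpha> t) (at t)"
    and shift_dpos: "\<And>t. t > 0 \<Longrightarrow> deriv \<alpha> t > 0"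
    and shift_dcont: "continuous_on {0<..} (deriv \<alpha>)"
    and shift_cont: "continuous_on {0<..} \<alpha>"
    and shift_pos: "\<And>t. t > 0 \<Longrightarrow> \<alpha> t > 0"
    and shift_mono: "\<And>s t. 0 < s \<Longrightarrow> s < t \<Longrightarrow> \<alpha> s < \<alpha> t"
    and shift_surj: "\<And>y. y > 0 \<Longrightarrow> \<exists>x>0. \<alpha> x = y"
proof -
  have bij: "bij_betw \<alpha> {0<..} {0<..}" and c1: "C1_pos \<alpha>"
    and c1i: "C1_pos (inv_into {0<..} \<alpha>)" and sm: "strict_mono_on {0<..} \<alpha>"
    using op unfolding op_non_carleman_shift_def by blast+
  show D: "(\<alpha> has_real_derivative deriv \<alpha> t) (at t)" if "t > 0" for t
    using c1 that unfolding C1_pos_def DERIV_deriv_iff_real_differentiable by blast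
  show "continuous_on {0<..} (deriv \<alpha>)" using c1 unfolding C1_pos_def by blast
  show "continuous_on {0<..} \<alpha>"
  proof (rule continuous_at_imp_continuous_on, intro ballI)
    fix x :: real assume "x \<in> {0<..}"
    then show "isCont \<alpha> x" using D DERIV_isCont by auto
  qed
  show pos: "\<alpha> t > 0" if "t > 0" for t
    using bij that unfolding bij_betw_def by auto
  show mono: "\<alpha> s < \<alpha> t" if "0 < s" "s < t" for s t
    using sm that unfolding strict_mono_on_def by auto
  show "\<exists>x>0. \<alpha> x = y" if "y > 0" for y
  proof -
    have "y \<in> \<alpha> ` {0<..}" using bij that unfolding bij_betw_def by auto
    then show ?thesis by auto
  qed
  show "deriv \<alpha> t > 0" if t: "t > 0" for t
  proof -
    let ?b = "inv_into {0<..} \<alpha>"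
    have inj: "inj_on \<alpha> {0<..}" using bij unfolding bij_betw_def by blast
    have "?b differentiable at (\<alpha> t)" using c1i pos[OF t] unfolding C1_pos_def by blast
    then have Db: "(?b has_real_derivative deriv ?b (\<alpha> t)) (at (\<alpha> t))"
      unfolding DERIV_deriv_iff_real_differentiable .
    have "((?b \<circ> \<alpha>) has_real_derivative deriv ?b (\<alpha> t) * deriv \<alpha> t) (at t)"
      by (rule DERIV_chain[OF Db D[OF t]])
    then have "((\<lambda>x. x) has_real_derivative deriv ?b (\<alpha> t) * deriv \<alpha> t) (at t)"
    proof (rule has_field_derivative_transform_within_open[where S="{0<..}"])
      show "open {0::real<..}" by simp
      show "t \<in> {0<..}" using t by simp
      fix x :: real assume "x \<in> {0<..}"
      then show "(?b \<circ> \<alpha>) x = x" using inv_into_f_f[OF inj] by simp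
    qed
    moreover have "((\<lambda>x. x) has_real_derivative 1) (at t)" by (rule DERIV_ident)
    ultimately have "deriv ?b (\<alpha> t) * deriv \<alpha> t = 1" by (rule DERIV_unique)
    then have nz: "deriv \<alpha> t \<noteq> 0" by auto
    have "\<not> deriv \<alpha> t < 0"
    proof
      assume "deriv \<alpha> t < 0"
      from DERIV_neg_dec_right[OF D[OF t] this] obtain d where d: "d > 0"
        and h: "\<forall>h>0. h < d \<longrightarrow> \<alpha> (t + h) < \<alpha> t" by blast
      have "\<alpha> (t + d/2) < \<alpha> t" using h d by simp
      moreover have "\<alpha> t < \<alpha> (t + d/2)" using mono t d by simp
      ultimately show False by simp
    qed
    then show ?thesis using nz by simp
  qed
qed

lemma mvt_shift:
  assumes op: "op_non_carleman_shift \<alpha>" and "0 < a" "a < b"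
  shows "\<exists>z>a. z < b \<and> \<alpha> b - \<alpha> a = (b - a) * deriv \<alpha> z"
proof (rule MVT2[OF assms(3)])
  fix x assume "a \<le> x" "x \<le> b"
  then have "x > 0" using assms by simp
  then show "(\<alpha> has_real_derivative deriv \<alpha> x) (at x)" using shift_D[OF op] by blast
qed

lemma ln_lip:
  fixes a b c :: real
  assumes "c > 0" "a \<ge> c" "b \<ge> c"
  shows "\<bar>ln a - ln b\<bar> \<le> \<bar>a - b\<bar> / c"
proof -
  have gen: "ln x - ln y \<le> \<bar>x - y\<bar> / c" if "x \<ge> c" "y \<ge> c" for x y :: real
  proof -
    have xy: "x > 0" "y > 0" using that assms by linarith+
    have "ln (x / y) \<le> x / y - 1" using xy by (intro ln_le_minus_one) simp
    then have "ln x - ln y \<le> (x - y) / y" using xy by (simp add: ln_div field_simps)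
    also have "\<dots> \<le> \<bar>x - y\<bar> / y" using xy by (simp add: divide_right_mono)
    also have "\<dots> \<le> \<bar>x - y\<bar> / c" using xy that assms by (simp add: frac_le)
    finally show ?thesis .
  qed
  from gen[OF assms(2,3)] gen[OF assms(3,2)] show ?thesis by (simp add: abs_minus_commute)
qed

lemma exp_lip:
  fixes a b B :: real
  assumes "\<bar>a\<bar> \<le> B" "\<bar>b\<bar> \<le> B"
  shows "\<bar>exp a - exp b\<bar> \<le> exp B * \<bar>a - b\<bar>"
proof -
  have gen: "exp y - exp x \<le> exp B * (y - x)" if "x \<le> y" "\<bar>y\<bar> \<le> B" for x y :: real
  proof -
    have "1 + (x - y) \<le> exp (x - y)" by (rule exp_ge_add_one_self)
    then have "exp y * (1 + (x - y)) \<le> exp y * exp (x - y)" by simp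
    then have "exp y - exp x \<le> exp y * (y - x)" by (simp add: exp_diff algebra_simps)
    also have "\<dots> \<le> exp B * (y - x)" using that by (intro mult_right_mono) auto
    finally show ?thesis .
  qed
  show ?thesis
  proof (cases "a \<le> b")
    case True
    then have "exp a \<le> exp b" by simp
    then show ?thesis using gen[OF True assms(2)] True by simp
  next
    case False
    then have "exp b \<le> exp a" by simp
    then show ?thesis using gen[of b a] False assms(1) by simp
  qed
qed



lemma fwd:
  fixes \<alpha> :: "real \<Rightarrow> real"
  assumes op: "op_non_carleman_shift \<alpha>" and sos: "\<alpha> \<in> SOS"
  shows "\<exists>\<omega> :: real \<Rightarrow> real.
       (\<forall>t>0. \<alpha> t = t * exp (\<omega> t)) \<and>
       (\<lambda>t. complex_of_real (\<omega> t)) \<in> SO \<and> C1_pos \<omega> \<and>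
       (\<lambda>t. complex_of_real (t * deriv \<omega> t)) \<in> SO \<and>
       (INF t\<in>{0<..}. 1 + t * deriv \<omega> t) > 0"
proof -
  note D = shift_D[OF op] and dpos = shift_dpos[OF op] and dcont = shift_dcont[OF op]
    and acont = shift_cont[OF op] and apos = shift_pos[OF op] and amono = shift_mono[OF op]
    and asurj = shift_surj[OF op] and mvt = mvt_shift[OF op]
  have lnCb: "(\<lambda>t. complex_of_real (ln (deriv \<alpha> t))) \<in> Cb" and dSO: "SOR (deriv \<alpha>)"
    using sos unfolding SOS_def SOR_def by blast+
  from lnCb obtain B where B: "\<forall>t>0. \<bar>ln (deriv \<alpha> t)\<bar> \<le> B" unfolding Cb_real_iff by blast
  define m where "m = exp (-B)"
  define M where "M = exp B"
  have mpos: "m > 0" and Mpos: "M > 0" unfolding m_def M_def by simp_all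
  have dbd: "m \<le> deriv \<alpha> t \<and> deriv \<alpha> t \<le> M" if "t > 0" for t
  proof -
    have e: "exp (ln (deriv \<alpha> t)) = deriv \<alpha> t" using dpos[OF that] by simp
    have "-B \<le> ln (deriv \<alpha> t)" "ln (deriv \<alpha> t) \<le> B" using B that by auto
    then have "exp (-B) \<le> exp (ln (deriv \<alpha> t))" "exp (ln (deriv \<alpha> t)) \<le> exp B"
      by (simp_all only: exp_le_cancel_iff)
    then show ?thesis unfolding e m_def M_def by simp
  qed
  have aup: "\<alpha> s \<le> M * s" if s: "s > 0" for s
  proof (rule field_le_epsilon)
    fix d :: real assume d: "d > 0"
    obtain x where x: "x > 0" "\<alpha> x = d" using asurj[OF d] by blast
    show "\<alpha> s \<le> M * s + d"
    proof (cases "x < s")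
      case True
      from mvt[OF x(1) True] obtain z where z: "z > x" "z < s" "\<alpha> s - \<alpha> x = (s - x) * deriv \<alpha> z"
        by blast
      have "deriv \<alpha> z \<le> M" using dbd z x by force
      then have "(s - x) * deriv \<alpha> z \<le> (s - x) * M" using True by (intro mult_left_mono) auto
      also have "\<dots> \<le> s * M" using x Mpos by (simp add: algebra_simps)
      finally show ?thesis using z x by (simp add: algebra_simps)
    next
      case False
      then have "\<alpha> s \<le> \<alpha> x" using amono s by (cases "s = x") (auto intro: less_imp_le)
      moreover have "M * s > 0" using Mpos s by simp
      ultimately show ?thesis using x by linarith
    qed
  qed
  have alow: "\<alpha> s \<ge> (m/2) * s" if s: "s > 0" for s
  proof -
    have "s/2 > 0" "s/2 < s" using s by simp_all
    from mvt[OF this] obtain z where z: "z > s/2" "z < s" "\<alpha> s - \<alpha> (s/2) = (s - s/2) * deriv \<alpha> z"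
      by blast
    have "deriv \<alpha> z \<ge> m" using dbd z s by force
    then have "(s/2) * m \<le> (s/2) * deriv \<alpha> z" using s by (intro mult_left_mono) auto
    moreover have "\<alpha> (s/2) > 0" using apos s by simp
    moreover have "\<alpha> s - \<alpha> (s/2) = (s/2) * deriv \<alpha> z" using z(3) by simp
    moreover have "(m/2) * s = (s/2)*m" by simp
    ultimately show ?thesis by linarith
  qed
  define g where "g t = \<alpha> t / t" for t
  have gbd: "m/2 \<le> g t \<and> g t \<le> M" if "t > 0" for t
    using aup[OF that] alow[OF that] that unfolding g_def by (simp add: field_simps)
  have gcont: "continuous_on {0<..} g" unfolding g_def
    by (intro continuous_intros acont) auto
  have gSO: "SOR g"
  proof (rule SOR_near[OF dSO gcont])
    show "\<forall>t>0. \<bar>g t\<bar> \<le> M" using gbd mpos by force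
    fix e :: real assume e: "e > 0"
    define \<mu> where "\<mu> = min (1/2) (e / M)"
    have mu: "0 < \<mu>" "\<mu> < 1" "\<mu> * M \<le> e" unfolding \<mu>_def using e Mpos
      by (auto simp: min_def field_simps)
    show "\<exists>\<mu>. 0 < \<mu> \<and> \<mu> < 1 \<and> (\<forall>t>0. \<exists>\<xi>. \<mu> * t \<le> \<xi> \<and> \<xi> \<le> t \<and> \<bar>g t - deriv \<alpha> \<xi>\<bar> \<le> e)"
    proof (rule exI[of _ \<mu>], intro conjI allI impI)
      show "0 < \<mu>" "\<mu> < 1" using mu by simp_all
      fix t :: real assume t: "t > 0"
      have mt: "\<mu> * t > 0" "\<mu> * t < t" using mu t by simp_all
      from mvt[OF mt] obtain z where z: "z > \<mu> * t" "z < t"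
        "\<alpha> t - \<alpha> (\<mu> * t) = (t - \<mu> * t) * deriv \<alpha> z" by blast
      have zb: "m \<le> deriv \<alpha> z" "deriv \<alpha> z \<le> M" using dbd z mt by force+
      have ab: "0 < \<alpha> (\<mu> * t)" "\<alpha> (\<mu> * t) \<le> M * (\<mu> * t)" using apos aup mt by auto
      have eq: "g t - deriv \<alpha> z = \<alpha> (\<mu> * t) / t - \<mu> * deriv \<alpha> z"
        using z(3) t unfolding g_def by (simp add: field_simps)
      have x1: "0 \<le> \<alpha> (\<mu> * t) / t" "\<alpha> (\<mu> * t) / t \<le> \<mu> * M"
        using ab t by (simp_all add: field_simps)
      have x2: "0 \<le> \<mu> * deriv \<alpha> z" "\<mu> * deriv \<alpha> z \<le> \<mu> * M"
        using zb mu mpos by (simp_all add: mult_left_mono)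
      have "\<bar>g t - deriv \<alpha> z\<bar> \<le> \<mu> * M" unfolding eq using x1 x2 by linarith
      then show "\<exists>\<xi>. \<mu> * t \<le> \<xi> \<and> \<xi> \<le> t \<and> \<bar>g t - deriv \<alpha> \<xi>\<bar> \<le> e"
        using z mu by (intro exI[of _ z]) auto
    qed
  qed
  define \<omega> where "\<omega> t = ln (\<alpha> t) - ln t" for t
  have om_g: "\<omega> t = ln (g t)" if "t > 0" for t
    unfolding \<omega>_def g_def using apos[OF that] that by (simp add: ln_div)
  have rep: "\<forall>t>0. \<alpha> t = t * exp (\<omega> t)"
  proof (intro allI impI)
    fix t :: real assume t: "t > 0"
    have "exp (\<omega> t) = g t" using om_g[OF t] gbd[OF t] mpos
      by (metis exp_ln less_le_trans half_gt_zero)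
    then show "\<alpha> t = t * exp (\<omega> t)" using t unfolding g_def by simp
  qed
  have omSO: "SOR \<omega>"
  proof (rule SOR_lip[OF gSO gSO])
    show "continuous_on {0<..} \<omega>" unfolding \<omega>_def
      by (intro continuous_intros acont) (auto dest: apos)
    define C where "C = \<bar>ln (m/2)\<bar> + \<bar>ln M\<bar>"
    show "\<forall>t>0. \<bar>\<omega> t\<bar> \<le> C"
    proof (intro allI impI)
      fix t :: real assume t: "t > 0"
      have "ln (m/2) \<le> ln (g t)" "ln (g t) \<le> ln M" using gbd[OF t] mpos by simp_all
      then show "\<bar>\<omega> t\<bar> \<le> C" unfolding om_g[OF t] C_def by linarith
    qed
    fix s t :: real assume st: "s > 0" "t > 0"
    have "\<bar>ln (g s) - ln (g t)\<bar> \<le> \<bar>g s - g t\<bar> / (m/2)"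
      using gbd st mpos by (intro ln_lip) auto
    then show "\<bar>\<omega> s - \<omega> t\<bar> \<le> (1/m) * (\<bar>g s - g t\<bar> + \<bar>g s - g t\<bar>)"
      unfolding om_g[OF st(1)] om_g[OF st(2)] by (simp add: field_simps)
  qed
  have Dom: "(\<omega> has_real_derivative (deriv \<alpha> t / \<alpha> t - 1 / t)) (at t)" if t: "t > 0" for t
    unfolding \<omega>_def
    by (rule derivative_eq_intros D[OF t] refl | use t apos[OF t] in simp)+
  have dom: "deriv \<omega> t = deriv \<alpha> t / \<alpha> t - 1 / t" if "t > 0" for t
    using Dom[OF that] by (rule DERIV_imp_deriv)
  have C1: "C1_pos \<omega>"
    unfolding C1_pos_def
  proof
    show "\<forall>t>0. \<omega> differentiable at t" using Dom real_differentiable_def by blast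
    have "continuous_on {0<..} (\<lambda>t. deriv \<alpha> t / \<alpha> t - 1 / t)"
      by (intro continuous_intros acont dcont) (auto dest: apos)
    then show "continuous_on {0<..} (deriv \<omega>)"
      by (rule continuous_on_cong[THEN iffD1, rotated 2]) (auto simp: dom)
  qed
  have tom: "t * deriv \<omega> t = deriv \<alpha> t / g t - 1" if t: "t > 0" for t
    unfolding dom[OF t] g_def using t apos[OF t] by (simp add: field_simps)
  have tomSO: "SOR (\<lambda>t. t * deriv \<omega> t)"
  proof (rule SOR_lip[OF dSO gSO])
    have "continuous_on {0<..} (\<lambda>t. t * (deriv \<alpha> t / \<alpha> t - 1 / t))"
      by (intro continuous_intros acont dcont) (auto dest: apos)
    then show "continuous_on {0<..} (\<lambda>t. t * deriv \<omega> t)"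
      by (rule continuous_on_cong[THEN iffD1, rotated 2]) (auto simp: dom)
    show "\<forall>t>0. \<bar>t * deriv \<omega> t\<bar> \<le> M / (m/2) + 1"
    proof (intro allI impI)
      fix t :: real assume t: "t > 0"
      have "deriv \<alpha> t / g t \<le> M / (m/2)" using dbd[OF t] gbd[OF t] mpos
        by (intro frac_le) auto
      moreover have "deriv \<alpha> t / g t \<ge> 0" using dbd[OF t] gbd[OF t] mpos by simp
      ultimately show "\<bar>t * deriv \<omega> t\<bar> \<le> M / (m/2) + 1" unfolding tom[OF t] by linarith
    qed
    fix s t :: real assume st: "s > 0" "t > 0"
    let ?a = "deriv \<alpha> s" and ?b = "g s" and ?c = "deriv \<alpha> t" and ?d = "g t"
    have bd: "m/2 \<le> ?b" "m/2 \<le> ?d" "\<bar>?c\<bar> \<le> M" using gbd dbd st mpos by force+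
    have bp: "?b > 0" "?d > 0" using bd mpos by linarith+
    have split: "?a / ?b - ?c / ?d = (?a - ?c) / ?b + ?c * (?d - ?b) / (?b * ?d)"
      using bp by (simp add: field_simps)
    have t1: "\<bar>(?a - ?c) / ?b\<bar> \<le> (2/m) * \<bar>?a - ?c\<bar>"
    proof -
      have "\<bar>(?a - ?c) / ?b\<bar> = \<bar>?a - ?c\<bar> / ?b" using bp by simp
      also have "\<dots> \<le> \<bar>?a - ?c\<bar> / (m/2)" using bp bd mpos by (intro divide_left_mono) auto
      also have "\<dots> = (2/m) * \<bar>?a - ?c\<bar>" by simp
      finally show ?thesis .
    qed
    have t2: "\<bar>?c * (?d - ?b) / (?b * ?d)\<bar> \<le> (4*M/(m*m)) * \<bar>?b - ?d\<bar>"
    proof -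
      have "\<bar>?c * (?d - ?b) / (?b * ?d)\<bar> = \<bar>?c\<bar> * \<bar>?b - ?d\<bar> / (?b * ?d)"
        using bp by (simp add: abs_mult abs_minus_commute)
      also have "\<dots> \<le> M * \<bar>?b - ?d\<bar> / (?b * ?d)"
        using bp bd by (intro divide_right_mono mult_right_mono) auto
      also have "\<dots> \<le> M * \<bar>?b - ?d\<bar> / ((m/2) * (m/2))"
        using bp bd mpos Mpos by (intro divide_left_mono mult_mono) auto
      finally show ?thesis by (simp add: field_simps)
    qed
    define L where "L = 2/m + 4*M/(m*m)"
    have "\<bar>s * deriv \<omega> s - t * deriv \<omega> t\<bar> = \<bar>?a / ?b - ?c / ?d\<bar>"
      unfolding tom[OF st(1)] tom[OF st(2)] by simp
    also have "\<dots> \<le> (2/m) * \<bar>?a - ?c\<bar> + (4*M/(m*m)) * \<bar>?b - ?d\<bar>"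
      unfolding split using t1 t2 by linarith
    also have "\<dots> \<le> L * (\<bar>?a - ?c\<bar> + \<bar>?b - ?d\<bar>)"
    proof -
      have "(2/m) * \<bar>?a - ?c\<bar> \<le> L * \<bar>?a - ?c\<bar>" unfolding L_def using mpos Mpos
        by (intro mult_right_mono) auto
      moreover have "(4*M/(m*m)) * \<bar>?b - ?d\<bar> \<le> L * \<bar>?b - ?d\<bar>" unfolding L_def using mpos Mpos
        by (intro mult_right_mono) auto
      ultimately show ?thesis by (simp add: distrib_left)
    qed
    finally show "\<bar>s * deriv \<omega> s - t * deriv \<omega> t\<bar> \<le> L * (\<bar>deriv \<alpha> s - deriv \<alpha> t\<bar> + \<bar>g s - g t\<bar>)" .
  qed
  have inf: "(INF t\<in>{0<..}. 1 + t * deriv \<omega> t) \<ge> m / M"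
  proof (rule cINF_greatest)
    show "{0::real<..} \<noteq> {}" by auto
    fix t :: real assume "t \<in> {0<..}"
    then have t: "t > 0" by simp
    have "m / M \<le> deriv \<alpha> t / g t" using dbd[OF t] gbd[OF t] mpos
      by (intro frac_le) auto
    then show "m / M \<le> 1 + t * deriv \<omega> t" unfolding tom[OF t] by simp
  qed
  have "m / M > 0" using mpos Mpos by simp
  then have "(INF t\<in>{0<..}. 1 + t * deriv \<omega> t) > 0" using inf by linarith
  then show ?thesis using rep omSO C1 tomSO unfolding SOR_def by blast
qed



lemma bwd:
  fixes \<alpha> \<omega> :: "real \<Rightarrow> real"
  assumes op: "op_non_carleman_shift \<alpha>"
    and rep: "\<forall>t>0. \<alpha> t = t * exp (\<omega> t)"
    and omSO: "SOR \<omega>" and C1: "C1_pos \<omega>"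
    and tomSO: "SOR (\<lambda>t. t * deriv \<omega> t)"
    and inf: "(INF t\<in>{0<..}. 1 + t * deriv \<omega> t) > 0"
  shows "\<alpha> \<in> SOS"
proof -
  have omc: "continuous_on {0<..} \<omega>" and tomc: "continuous_on {0<..} (\<lambda>t. t * deriv \<omega> t)"
    using omSO tomSO unfolding SOR_iff by blast+
  obtain B0 where B0: "\<forall>t>0. \<bar>\<omega> t\<bar> \<le> B0" using omSO unfolding SOR_iff by blast
  obtain B1' where B1': "\<forall>t>0. \<bar>t * deriv \<omega> t\<bar> \<le> B1'" using tomSO unfolding SOR_iff by blast
  define B1 where "B1 = max B1' 0"
  have B1: "\<forall>t>0. \<bar>t * deriv \<omega> t\<bar> \<le> B1" "B1 \<ge> 0" using B1' unfolding B1_def by force+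
  define c where "c = (INF t\<in>{0<..}. 1 + t * deriv \<omega> t)"
  have cpos: "c > 0" using inf unfolding c_def .
  define k where "k t = 1 + t * deriv \<omega> t" for t
  have kb: "c \<le> k t \<and> k t \<le> 1 + B1" if t: "t > 0" for t
  proof
    have "bdd_below ((\<lambda>t. 1 + t * deriv \<omega> t) ` {0<..})"
      unfolding bdd_below_def
    proof (rule exI[of _ "1 - B1"], clarify)
      fix x :: real assume "0 < x"
      then have "\<bar>x * deriv \<omega> x\<bar> \<le> B1" using B1 by simp
      then show "1 - B1 \<le> 1 + x * deriv \<omega> x" by linarith
    qed
    then show "c \<le> k t" unfolding c_def k_def using t by (intro cINF_lower) auto
    show "k t \<le> 1 + B1" unfolding k_def using B1 t by force
  qed
  have kpos: "k t > 0" if "t > 0" for t using kb[OF that] cpos by linarith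
  have Dom: "(\<omega> has_real_derivative deriv \<omega> t) (at t)" if "t > 0" for t
    using C1 that unfolding C1_pos_def DERIV_deriv_iff_real_differentiable by blast
  have Dal: "(\<alpha> has_real_derivative exp (\<omega> t) * k t) (at t)" if t: "t > 0" for t
  proof -
    have "((\<lambda>x. x * exp (\<omega> x)) has_real_derivative exp (\<omega> t) * k t) (at t)"
      unfolding k_def
      by (rule derivative_eq_intros Dom[OF t] refl | simp add: algebra_simps)+
    then show ?thesis
    proof (rule has_field_derivative_transform_within_open[where S="{0<..}"])
      show "open {0::real<..}" by simp
      show "t \<in> {0<..}" using t by simp
      fix x :: real assume "x \<in> {0<..}"
      then show "x * exp (\<omega> x) = \<alpha> x" using rep by simp
    qed
  qed
  have da: "deriv \<alpha> t = exp (\<omega> t) * k t" if "t > 0" for t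
    using Dal[OF that] by (rule DERIV_imp_deriv)
  have dkc: "continuous_on {0<..} k" unfolding k_def by (rule continuous_on_add[OF continuous_on_const tomc])
  have lnCb: "(\<lambda>t. complex_of_real (ln (deriv \<alpha> t))) \<in> Cb"
    unfolding Cb_real_iff
  proof
    have "continuous_on {0<..} (\<lambda>t. \<omega> t + ln (k t))"
      by (intro continuous_intros omc dkc) (auto dest: kpos)
    then show "continuous_on {0<..} (\<lambda>t. ln (deriv \<alpha> t))"
    proof (rule continuous_on_cong[THEN iffD1, rotated 2])
      fix x :: real assume "x \<in> {0<..}"
      then have x: "x > 0" by simp
      show "\<omega> x + ln (k x) = ln (deriv \<alpha> x)" using da[OF x] kpos[OF x] by (simp add: ln_mult)
    qed simp
    show "\<exists>B. \<forall>t>0. \<bar>ln (deriv \<alpha> t)\<bar> \<le> B"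
    proof (intro exI allI impI)
      fix t :: real assume t: "t > 0"
      have e: "ln (deriv \<alpha> t) = \<omega> t + ln (k t)" using da[OF t] kpos[OF t] by (simp add: ln_mult)
      have "ln c \<le> ln (k t)" "ln (k t) \<le> ln (1 + B1)" using kb[OF t] cpos by simp_all
      then show "\<bar>ln (deriv \<alpha> t)\<bar> \<le> B0 + \<bar>ln c\<bar> + \<bar>ln (1 + B1)\<bar>"
        unfolding e using B0 t by force
    qed
  qed
  have dSO: "SOR (deriv \<alpha>)"
  proof (rule SOR_lip[OF omSO tomSO])
    have "continuous_on {0<..} (\<lambda>t. exp (\<omega> t) * k t)"
      by (intro continuous_intros omc dkc)
    then show "continuous_on {0<..} (deriv \<alpha>)"
      by (rule continuous_on_cong[THEN iffD1, rotated 2]) (auto simp: da)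
    show "\<forall>t>0. \<bar>deriv \<alpha> t\<bar> \<le> exp B0 * (1 + B1)"
    proof (intro allI impI)
      fix t :: real assume t: "t > 0"
      have "\<bar>\<omega> t\<bar> \<le> B0" using B0 t by simp
      then have "exp (\<omega> t) \<le> exp B0" by simp
      then have "exp (\<omega> t) * k t \<le> exp B0 * (1 + B1)"
        using kb[OF t] kpos[OF t] by (intro mult_mono) auto
      moreover have "exp (\<omega> t) * k t > 0" using kpos[OF t] by simp
      ultimately show "\<bar>deriv \<alpha> t\<bar> \<le> exp B0 * (1 + B1)" unfolding da[OF t] by simp
    qed
    fix s t :: real assume st: "s > 0" "t > 0"
    let ?a = "\<omega> s" and ?b = "\<omega> t" and ?x = "s * deriv \<omega> s" and ?y = "t * deriv \<omega> t"
    have ks: "k s = 1 + ?x" "k t = 1 + ?y" unfolding k_def by simp_all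
    have split: "exp ?a * k s - exp ?b * k t = exp ?a * (?x - ?y) + k t * (exp ?a - exp ?b)"
      unfolding ks by (simp add: algebra_simps)
    have t1: "\<bar>exp ?a * (?x - ?y)\<bar> \<le> exp B0 * \<bar>?x - ?y\<bar>"
    proof -
      have "\<bar>?a\<bar> \<le> B0" using B0 st by simp
      then have "exp ?a \<le> exp B0" by simp
      then show ?thesis unfolding abs_mult by (intro mult_right_mono) auto
    qed
    have el: "\<bar>exp ?a - exp ?b\<bar> \<le> exp B0 * \<bar>?a - ?b\<bar>" using B0 st by (intro exp_lip) auto
    have t2: "\<bar>k t * (exp ?a - exp ?b)\<bar> \<le> (1 + B1) * (exp B0 * \<bar>?a - ?b\<bar>)"
      unfolding abs_mult using kb[OF st(2)] kpos[OF st(2)] el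
      by (intro mult_mono) auto
    define L where "L = exp B0 * (1 + B1)"
    have "\<bar>deriv \<alpha> s - deriv \<alpha> t\<bar> \<le> exp B0 * \<bar>?x - ?y\<bar> + (1 + B1) * (exp B0 * \<bar>?a - ?b\<bar>)"
      unfolding da[OF st(1)] da[OF st(2)] split using t1 t2 by linarith
    also have "\<dots> \<le> L * (\<bar>?a - ?b\<bar> + \<bar>?x - ?y\<bar>)"
    proof -
      have "exp B0 * \<bar>?x - ?y\<bar> \<le> L * \<bar>?x - ?y\<bar>" unfolding L_def using B1(2)
        by (intro mult_right_mono) auto
      moreover have "(1 + B1) * (exp B0 * \<bar>?a - ?b\<bar>) = L * \<bar>?a - ?b\<bar>" unfolding L_def by simp
      moreover have "L * (\<bar>?a - ?b\<bar> + \<bar>?x - ?y\<bar>) = L * \<bar>?a - ?b\<bar> + L * \<bar>?x - ?y\<bar>"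
        by (simp add: distrib_left)
      ultimately show ?thesis by linarith
    qed
    finally show "\<bar>deriv \<alpha> s - deriv \<alpha> t\<bar> \<le> L * (\<bar>\<omega> s - \<omega> t\<bar> + \<bar>s * deriv \<omega> s - t * deriv \<omega> t\<bar>)" .
  qed
  show ?thesis unfolding SOS_def using op lnCb dSO unfolding SOR_def by blast
qed


theorem lemma2p2:
  fixes \<alpha> :: "real \<Rightarrow> real"
  assumes "op_non_carleman_shift \<alpha>"
  shows "\<alpha> \<in> SOS \<longleftrightarrow>
    (\<exists>\<omega> :: real \<Rightarrow> real.
       (\<forall>t>0. \<alpha> t = t * exp (\<omega> t)) \<and>
       (\<lambda>t. complex_of_real (\<omega> t)) \<in> SO \<and> C1_pos \<omega> \<and>
       (\<lambda>t. complex_of_real (t * deriv \<omega> t)) \<in> SO \<and>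
       (INF t\<in>{0<..}. 1 + t * deriv \<omega> t) > 0)"
proof
  assume "\<alpha> \<in> SOS"
  then show "\<exists>\<omega> :: real \<Rightarrow> real.
       (\<forall>t>0. \<alpha> t = t * exp (\<omega> t)) \<and>
       (\<lambda>t. complex_of_real (\<omega> t)) \<in> SO \<and> C1_pos \<omega> \<and>
       (\<lambda>t. complex_of_real (t * deriv \<omega> t)) \<in> SO \<and>
       (INF t\<in>{0<..}. 1 + t * deriv \<omega> t) > 0"
    using fwd[OF assms] by blast
next
  assume "\<exists>\<omega> :: real \<Rightarrow> real.
       (\<forall>t>0. \<alpha> t = t * exp (\<omega> t)) \<and>
       (\<lambda>t. complex_of_real (\<omega> t)) \<in> SO \<and> C1_pos \<omega> \<and>
       (\<lambda>t. complex_of_real (t * deriv \<omega> t)) \<in> SO \<and>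
       (INF t\<in>{0<..}. 1 + t * deriv \<omega> t) > 0"
  then obtain \<omega> :: "real \<Rightarrow> real" where
    h: "\<forall>t>0. \<alpha> t = t * exp (\<omega> t)" "(\<lambda>t. complex_of_real (\<omega> t)) \<in> SO" "C1_pos \<omega>"
       "(\<lambda>t. complex_of_real (t * deriv \<omega> t)) \<in> SO" "(INF t\<in>{0<..}. 1 + t * deriv \<omega> t) > 0"
    by blast
  show "\<alpha> \<in> SOS"
    by (rule bwd[OF assms h(1) _ h(3) _ h(5)]) (use h in \<open>simp_all add: SOR_def\<close>)
qed

end
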